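(* A C*-algebra $A$ is AF if and only if there exists a map $\rho\colon A\to A$ such that $\|a-\rho(a)\|<1$ for every $a\in A$ and $C^*(\{\rho(a)\}_{a\in F})$ is finite-dimensional for every finite subset $F$ of $A$.
   Context: A C*-algebra is AF if it has a directed family of finite-dimensional C*-subalgebras with dense union. $C^*(S)$ denotes the C*-subalgebra generated by $S$. The map $\rho$ is an arbitrary function (not assumed linear or continuous). *)

theory Defs
  imports "HOL-Analysis.Analysis"
begin

text \<open>The real scalar multiplication of the
underlying real Banach algebra is the restriction of the complex one.\<close>

class cstar_algebra = real_normed_algebra + banach +
  fixes scaleC :: "complex \<Rightarrow> 'a \<Rightarrow> 'a"
    and adj :: "'a \<Rightarrow> 'a"
  assumes scaleC_of_real: "scaleC (complex_of_real r) x = scaleR r x"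
    and scaleC_add_right: "scaleC c (x + y) = scaleC c x + scaleC c y"
    and scaleC_add_left: "scaleC (c + d) x = scaleC c x + scaleC d x"
    and scaleC_scaleC: "scaleC c (scaleC d x) = scaleC (c * d) x"
    and norm_scaleC: "norm (scaleC c x) = cmod c * norm x"
    and mult_scaleC_left: "scaleC c x * y = scaleC c (x * y)"
    and mult_scaleC_right: "x * scaleC c y = scaleC c (x * y)"
    and adj_adj: "adj (adj x) = x"
    and adj_add: "adj (x + y) = adj x + adj y"
    and adj_scaleC: "adj (scaleC c x) = scaleC (cnj c) (adj x)"
    and adj_mult: "adj (x * y) = adj y * adj x"
    and cstar_identity: "norm (adj x * x) = (norm x)\<^sup>2"

definition cstar_subalgebra :: "'a::cstar_algebra set \<Rightarrow> bool" where
  "cstar_subalgebra B \<longleftrightarrow>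
     0 \<in> B \<and>
     (\<forall>x\<in>B. \<forall>y\<in>B. x + y \<in> B) \<and>
     (\<forall>c. \<forall>x\<in>B. scaleC c x \<in> B) \<and>
     (\<forall>x\<in>B. \<forall>y\<in>B. x * y \<in> B) \<and>
     (\<forall>x\<in>B. adj x \<in> B) \<and>
     closed B"

definition cstar_gen :: "'a::cstar_algebra set \<Rightarrow> 'a set" where
  "cstar_gen S = \<Inter>{B. cstar_subalgebra B \<and> S \<subseteq> B}"

definition cspan :: "'a::cstar_algebra set \<Rightarrow> 'a set" where
  "cspan E = {x. \<exists>c. x = (\<Sum>e\<in>E. scaleC (c e) e)}"

definition fin_dim :: "'a::cstar_algebra set \<Rightarrow> bool" where
  "fin_dim B \<longleftrightarrow> (\<exists>E. finite E \<and> B \<subseteq> cspan E)"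

definition AF_algebra :: "'a::cstar_algebra itself \<Rightarrow> bool" where
  "AF_algebra _ \<longleftrightarrow>
     (\<exists>\<F> :: 'a set set.
        \<F> \<noteq> {} \<and>
        (\<forall>B\<in>\<F>. cstar_subalgebra B \<and> fin_dim B) \<and>
        (\<forall>B1\<in>\<F>. \<forall>B2\<in>\<F>. \<exists>B3\<in>\<F>. B1 \<union> B2 \<subseteq> B3) \<and>
        closure (\<Union>\<F>) = UNIV)"

end

theory Submission
  imports Defs
begin

lemma cstar_gen_sub: "cstar_subalgebra (cstar_gen (S::'a::cstar_algebra set))"
  unfolding cstar_subalgebra_def cstar_gen_def
  by (auto simp: cstar_subalgebra_def intro!: closed_Inter)

lemma cstar_gen_incl: "S \<subseteq> cstar_gen S"
  unfolding cstar_gen_def by auto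

lemma cstar_gen_least: "cstar_subalgebra B \<Longrightarrow> S \<subseteq> B \<Longrightarrow> cstar_gen S \<subseteq> B"
  unfolding cstar_gen_def by auto

lemma cstar_gen_mono: "S \<subseteq> T \<Longrightarrow> cstar_gen S \<subseteq> cstar_gen T"
  by (meson cstar_gen_incl cstar_gen_least cstar_gen_sub order_trans)

lemma fin_dim_mono: "fin_dim B \<Longrightarrow> A \<subseteq> B \<Longrightarrow> fin_dim A"
  unfolding fin_dim_def by blast

theorem lemma6p1:
  shows "AF_algebra TYPE('a::cstar_algebra) \<longleftrightarrow>
    (\<exists>\<rho> :: 'a \<Rightarrow> 'a.
       (\<forall>a. norm (a - \<rho> a) < 1) \<and>
       (\<forall>F. finite F \<longrightarrow> fin_dim (cstar_gen (\<rho> ` F))))"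
proof
  assume "AF_algebra TYPE('a)"
  then obtain \<F> :: "'a set set" where ne: "\<F> \<noteq> {}"
    and sub: "\<forall>B\<in>\<F>. cstar_subalgebra B \<and> fin_dim B"
    and dir: "\<forall>B1\<in>\<F>. \<forall>B2\<in>\<F>. \<exists>B3\<in>\<F>. B1 \<union> B2 \<subseteq> B3"
    and dense: "closure (\<Union>\<F>) = UNIV"
    unfolding AF_algebra_def by (elim exE conjE)
  have ex: "\<exists>y. y \<in> \<Union>\<F> \<and> norm (a - y) < 1" for a
  proof -
    have "a \<in> closure (\<Union>\<F>)" unfolding dense by (rule UNIV_I)
    hence "\<forall>e>0. \<exists>y\<in>\<Union>\<F>. dist y a < e" by (simp only: closure_approachable)
    hence "\<exists>y\<in>\<Union>\<F>. dist y a < 1" using zero_less_one by blast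
    then obtain y where y: "y \<in> \<Union>\<F>" "dist y a < 1" by blast
    have "norm (a - y) < 1" using y(2) by (simp only: dist_norm norm_minus_commute)
    with y(1) show ?thesis by blast
  qed
  define \<rho> where "\<rho> a = (SOME y. y \<in> \<Union>\<F> \<and> norm (a - y) < 1)" for a
  have rho: "\<rho> a \<in> \<Union>\<F> \<and> norm (a - \<rho> a) < 1" for a
    unfolding \<rho>_def by (rule someI_ex[OF ex[of a]])
  have cov: "\<exists>B\<in>\<F>. \<rho> ` F \<subseteq> B" if fin: "finite F" for F
    using fin
  proof (induction F rule: finite_induct)
    case empty
    from ne obtain B where "B \<in> \<F>" by blast
    then show ?case by blast
  next
    case (insert x F)
    from insert.IH obtain B where B: "B \<in> \<F>" "\<rho> ` F \<subseteq> B" by blast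
    from rho[of x] obtain B' where B': "B' \<in> \<F>" "\<rho> x \<in> B'" by blast
    from dir B(1) B'(1) obtain B3 where B3: "B3 \<in> \<F>" "B \<union> B' \<subseteq> B3" by blast
    have "\<rho> ` insert x F \<subseteq> B3" using B(2) B'(2) B3(2) by auto
    with B3(1) show ?case by (rule bexI[rotated])
  qed
  show "\<exists>\<rho> :: 'a \<Rightarrow> 'a. (\<forall>a. norm (a - \<rho> a) < 1) \<and>
       (\<forall>F. finite F \<longrightarrow> fin_dim (cstar_gen (\<rho> ` F)))"
  proof (rule exI[of _ \<rho>], intro conjI allI impI)
    fix a show "norm (a - \<rho> a) < 1" using rho[of a] by (rule conjunct2)
  next
    fix F :: "'a set" assume "finite F"
    then obtain B where B: "B \<in> \<F>" "\<rho> ` F \<subseteq> B" using cov by blast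
    from sub B(1) have sB: "cstar_subalgebra B" "fin_dim B" by auto
    have "cstar_gen (\<rho> ` F) \<subseteq> B" by (rule cstar_gen_least[OF sB(1) B(2)])
    then show "fin_dim (cstar_gen (\<rho> ` F))" by (rule fin_dim_mono[OF sB(2)])
  qed
next
  assume "\<exists>\<rho> :: 'a \<Rightarrow> 'a. (\<forall>a. norm (a - \<rho> a) < 1) \<and>
       (\<forall>F. finite F \<longrightarrow> fin_dim (cstar_gen (\<rho> ` F)))"
  then obtain \<rho> :: "'a \<Rightarrow> 'a" where r1: "\<And>a. norm (a - \<rho> a) < 1"
    and r2: "\<And>F. finite F \<Longrightarrow> fin_dim (cstar_gen (\<rho> ` F))" by blast
  define \<F> where "\<F> = {cstar_gen (\<rho> ` F) | F. finite F}"
  have memF: "cstar_gen (\<rho> ` F) \<in> \<F>" if "finite F" for F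
    unfolding \<F>_def using that by (intro CollectI exI[of _ F] conjI) (rule refl)
  have elimF: "\<exists>F. finite F \<and> B = cstar_gen (\<rho> ` F)" if "B \<in> \<F>" for B
    using that unfolding \<F>_def by (elim CollectE exE conjE) (intro exI conjI)
  have c1: "\<F> \<noteq> {}" using memF[OF finite.emptyI] by (intro notI) (simp only: empty_iff)
  have c2: "\<forall>B\<in>\<F>. cstar_subalgebra B \<and> fin_dim B"
  proof
    fix B assume "B \<in> \<F>"
    then obtain F where "finite F" "B = cstar_gen (\<rho> ` F)" using elimF by blast
    then show "cstar_subalgebra B \<and> fin_dim B" using cstar_gen_sub r2 by simp
  qed
  have c3: "\<forall>B1\<in>\<F>. \<forall>B2\<in>\<F>. \<exists>B3\<in>\<F>. B1 \<union> B2 \<subseteq> B3"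
  proof (intro ballI)
    fix B1 B2 assume "B1 \<in> \<F>" "B2 \<in> \<F>"
    then obtain F1 F2 where f: "finite F1" "finite F2" and b: "B1 = cstar_gen (\<rho> ` F1)"
      "B2 = cstar_gen (\<rho> ` F2)" using elimF by meson
    have mem: "cstar_gen (\<rho> ` (F1 \<union> F2)) \<in> \<F>"
      using f by (intro memF) (rule finite_UnI)
    have s1: "cstar_gen (\<rho> ` F1) \<subseteq> cstar_gen (\<rho> ` (F1 \<union> F2))"
      by (intro cstar_gen_mono image_mono Un_upper1)
    have s2: "cstar_gen (\<rho> ` F2) \<subseteq> cstar_gen (\<rho> ` (F1 \<union> F2))"
      by (intro cstar_gen_mono image_mono Un_upper2)
    show "\<exists>B3\<in>\<F>. B1 \<union> B2 \<subseteq> B3"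
      using mem s1 s2 unfolding b by blast
  qed
  have c4: "closure (\<Union>\<F>) = UNIV"
  proof -
    have "x \<in> closure (\<Union>\<F>)" for x
    proof -
      have "\<exists>y\<in>\<Union>\<F>. dist y x < e" if e: "e > 0" for e :: real
      proof -
        define z where "z = scaleR (1/e) x"
        define y where "y = scaleC (complex_of_real e) (\<rho> z)"
        have "\<rho> z \<in> cstar_gen (\<rho> ` {z})" using cstar_gen_incl by blast
        hence "y \<in> cstar_gen (\<rho> ` {z})"
          using cstar_gen_sub[of "\<rho> ` {z}"] unfolding cstar_subalgebra_def y_def by blast
        moreover have "cstar_gen (\<rho> ` {z}) \<in> \<F>" by (intro memF finite.intros)
        ultimately have yin: "y \<in> \<Union>\<F>" by blast
        have y2: "y = scaleR e (\<rho> z)" unfolding y_def by (rule scaleC_of_real)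
        have x2: "x = scaleR e z" unfolding z_def using e by simp
        have "x - y = scaleR e (z - \<rho> z)" unfolding y2
          by (subst x2) (rule scaleR_diff_right[symmetric])
        hence "norm (x - y) = e * norm (z - \<rho> z)" using e by simp
        also have "\<dots> < e" using r1[of z] e by simp
        finally have "dist y x < e" by (simp add: dist_norm norm_minus_commute)
        thus ?thesis using yin by blast
      qed
      thus ?thesis unfolding closure_approachable by blast
    qed
    thus ?thesis by blast
  qed
  show "AF_algebra TYPE('a)" unfolding AF_algebra_def by (intro exI[of _ \<F>] conjI c1 c2 c3 c4)
qed

end
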